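(* Let $g(q)\in\mathbb Z[q]$ and let $x_n,y_n$ ($n\ge1$) be indeterminates. Define elements $\mathsf S_n,\mathsf P_n,\mathsf I_n$ ($n\ge1$) of $\mathbb Q[q][x_d,y_d:d\ge1]$ recursively by the relations, for all $n\ge1$, $$\sum_{d|n}d\Big[\tfrac nd\Big]_{g(q)}\mathsf S_d^{\,n/d}=\sum_{d|n}d\Big[\tfrac nd\Big]_{g(q)}x_d^{\,n/d}+\sum_{d|n}d\Big[\tfrac nd\Big]_{g(q)}y_d^{\,n/d},$$ $$\sum_{d|n}d\Big[\tfrac nd\Big]_{g(q)}\mathsf P_d^{\,n/d}=(1-g(q))\Big(\sum_{d|n}d\Big[\tfrac nd\Big]_{g(q)}x_d^{\,n/d}\Big)\Big(\sum_{d|n}d\Big[\tfrac nd\Big]_{g(q)}y_d^{\,n/d}\Big),$$ $$\sum_{d|n}d\Big[\tfrac nd\Big]_{g(q)}x_d^{\,n/d}+\sum_{d|n}d\Big[\tfrac nd\Big]_{g(q)}\mathsf I_d^{\,n/d}=0.$$ Then for every $n\ge1$, $\mathsf S_n,\mathsf P_n\in\mathbb Z[g(q)][x_d,y_d:d\mid n]$ and $\mathsf I_n\in\mathbb Z[g(q)][x_d:d\mid n]$.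
   Context: For a polynomial $g(q)\in\mathbb Z[q]$ and a positive integer $n$, $[n]_{g(q)}:=1+g(q)+g(q)^2+\cdots+g(q)^{n-1}$. $\mathbb Z[g(q)]$ denotes the subring of $\mathbb Z[q]$ generated by $g(q)$. (The recursions determine $\mathsf S_n,\mathsf P_n,\mathsf I_n$ uniquely since the term with $d=n$ has coefficient $n$.) *)

theory Defs
  imports "HOL-Computational_Algebra.Polynomial" "HOL-Library.Poly_Mapping"
begin

datatype var = X nat | Y nat

text \<open>The polynomial ring Q[q][x_d, y_d : d >= 1]: finitely supported maps from
  monomials (finitely supported exponent vectors) to coefficients in Q[q].\<close>
type_synonym mpoly = "(var \<Rightarrow>\<^sub>0 nat) \<Rightarrow>\<^sub>0 rat poly"

definition Const :: "rat poly \<Rightarrow> mpoly" where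
  "Const c = Poly_Mapping.single 0 c"

definition Var :: "var \<Rightarrow> mpoly" where
  "Var v = Poly_Mapping.single (Poly_Mapping.single v 1) 1"

definition qint :: "int poly \<Rightarrow> nat \<Rightarrow> rat poly" where
  "qint g n = (\<Sum>i<n. (map_poly of_int g) ^ i)"

definition ghost :: "int poly \<Rightarrow> (nat \<Rightarrow> mpoly) \<Rightarrow> nat \<Rightarrow> mpoly" where
  "ghost g F n = (\<Sum>d\<in>{d. d dvd n}. of_nat d * Const (qint g (n div d)) * F d ^ (n div d))"

text \<open>Z[g(q)], the subring of Z[q] generated by g(q), embedded in Q[q].\<close>
definition Zg :: "int poly \<Rightarrow> rat poly set" where
  "Zg g = {map_poly of_int (pcompose h g) | h. True}"

definition in_Zg_poly :: "int poly \<Rightarrow> var set \<Rightarrow> mpoly \<Rightarrow> bool" where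
  "in_Zg_poly g V p \<longleftrightarrow>
     (\<forall>m\<in>Poly_Mapping.keys p. Poly_Mapping.keys m \<subseteq> V) \<and>
     (\<forall>m\<in>Poly_Mapping.keys p. Poly_Mapping.lookup p m \<in> Zg g)"

end

theory Submission
  imports Defs "HOL-Computational_Algebra.Formal_Power_Series"
begin


lemma Const_add: "Const (a + b) = Const a + Const b"
  by (simp add: Const_def single_add)
lemma Const_mult: "Const (a * b) = Const a * Const b"
  by (simp add: Const_def mult_single)
lemma Const_one[simp]: "Const 1 = 1"
  by (simp add: Const_def)
lemma Const_zero[simp]: "Const 0 = 0"
  by (simp add: Const_def)
lemma Const_diff: "Const (a - b) = Const a - Const b"
  by (simp add: Const_def single_diff)
lemma Const_uminus: "Const (- a) = - Const a"
  by (simp add: Const_def single_uminus)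
lemma Const_power: "Const (a ^ k) = Const a ^ k"
  by (induct k) (simp_all add: Const_mult)
lemma Const_sum: "Const (sum f S) = (\<Sum>i\<in>S. Const (f i))"
  by (induct S rule: infinite_finite_induct) (simp_all add: Const_add)
lemma Const_of_nat: "Const (of_nat k) = of_nat k"
  by (simp add: Const_def)

lemma lookup_Const_mult: "Poly_Mapping.lookup (Const c * p) m = c * Poly_Mapping.lookup p m"
  unfolding Const_def mult_map_scale_conv_mult[symmetric]
  by (simp add: Poly_Mapping.map.rep_eq when_def)

definition GG :: "int poly \<Rightarrow> rat poly" where "GG g = map_poly of_int g"

lemma map_poly_of_int_add: "map_poly (of_int::int\<Rightarrow>rat) (p + q) = map_poly of_int p + map_poly of_int q"
  by (rule poly_eqI) (simp add: coeff_map_poly)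
lemma map_poly_of_int_mult: "map_poly (of_int::int\<Rightarrow>rat) (p * q) = map_poly of_int p * map_poly of_int q"
  by (rule poly_eqI) (simp add: coeff_map_poly coeff_mult)
lemma map_poly_of_int_uminus: "map_poly (of_int::int\<Rightarrow>rat) (- p) = - map_poly of_int p"
  by (rule poly_eqI) (simp add: coeff_map_poly)

lemma Zg_add: "a \<in> Zg g \<Longrightarrow> b \<in> Zg g \<Longrightarrow> a + b \<in> Zg g"
  unfolding Zg_def by (auto simp: map_poly_of_int_add[symmetric] pcompose_add[symmetric])
lemma Zg_mult: "a \<in> Zg g \<Longrightarrow> b \<in> Zg g \<Longrightarrow> a * b \<in> Zg g"
  unfolding Zg_def by (auto simp: map_poly_of_int_mult[symmetric] pcompose_mult[symmetric])
lemma Zg_uminus: "a \<in> Zg g \<Longrightarrow> - a \<in> Zg g"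
  unfolding Zg_def by (auto simp: map_poly_of_int_uminus[symmetric] pcompose_uminus[symmetric])
lemma Zg_diff: "a \<in> Zg g \<Longrightarrow> b \<in> Zg g \<Longrightarrow> a - b \<in> Zg g"
  using Zg_add[of a g "-b"] Zg_uminus[of b g] by simp
lemma Zg_const: "[:of_int c:] \<in> Zg g"
proof -
  have "[:of_int c:] = map_poly (of_int::int\<Rightarrow>rat) (pcompose [:c:] g)"
    by (simp add: map_poly_pCons)
  then show ?thesis unfolding Zg_def by blast
qed
lemma Zg_zero: "0 \<in> Zg g" using Zg_const[of 0 g] by simp
lemma Zg_one: "1 \<in> Zg g" using Zg_const[of 1 g] by (simp add: one_pCons)
lemma Zg_G: "GG g \<in> Zg g"
proof -
  have "GG g = map_poly (of_int::int\<Rightarrow>rat) (pcompose [:0,1:] g)"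
    by (simp add: GG_def pcompose_pCons)
  then show ?thesis unfolding Zg_def by blast
qed



definition cset :: "rat poly set \<Rightarrow> mpoly set" where
  "cset Z = {p. \<forall>m. Poly_Mapping.lookup p m \<in> Z}"

definition addcl :: "rat poly set \<Rightarrow> bool" where
  "addcl Z \<longleftrightarrow> 0 \<in> Z \<and> (\<forall>x\<in>Z. \<forall>y\<in>Z. x + y \<in> Z)"

lemma sum_closed_addcl:
  assumes "addcl Z" "\<And>x. x \<in> S \<Longrightarrow> f x \<in> Z"
  shows "sum f S \<in> Z"
  using assms(2)
proof (induct S rule: infinite_finite_induct)
  case (infinite A) then show ?case using assms(1) by (simp add: addcl_def)
next
  case empty then show ?case using assms(1) by (simp add: addcl_def)
next
  case (insert x F) then show ?case using assms(1) by (simp add: addcl_def)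
qed

lemma Sum_any_closed:
  assumes "addcl Z" "\<And>x. f x \<in> Z"
  shows "Sum_any f \<in> Z"
proof (cases "finite {a. f a \<noteq> 0}")
  case True
  then show ?thesis using sum_closed_addcl[OF assms(1), of "{a. f a \<noteq> 0}" f] assms(2)
    by (simp add: Sum_any.expand_set)
next
  case False
  then show ?thesis using assms(1) by (simp add: Sum_any.infinite addcl_def)
qed

lemma when_closed: "addcl Z \<Longrightarrow> a \<in> Z \<Longrightarrow> (a when P) \<in> Z"
  by (simp add: when_def addcl_def)

lemma cset_mult:
  assumes "addcl Z1" "addcl Z2" "addcl Z3" "\<And>x y. x \<in> Z1 \<Longrightarrow> y \<in> Z2 \<Longrightarrow> x * y \<in> Z3"
    and "p \<in> cset Z1" "q \<in> cset Z2"
  shows "p * q \<in> cset Z3"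
  unfolding cset_def
proof (intro CollectI allI)
  fix k
  show "Poly_Mapping.lookup (p * q) k \<in> Z3"
    unfolding lookup_mult
    apply (rule Sum_any_closed[OF assms(3)])
    apply (rule assms(4))
    using assms(5) apply (simp add: cset_def)
    apply (rule Sum_any_closed[OF assms(2)])
    apply (rule when_closed[OF assms(2)])
    using assms(6) apply (simp add: cset_def)
    done
qed

lemma cset_add: "addcl Z \<Longrightarrow> p \<in> cset Z \<Longrightarrow> q \<in> cset Z \<Longrightarrow> p + q \<in> cset Z"
  by (simp add: cset_def addcl_def lookup_add)

lemma cset_zero: "addcl Z \<Longrightarrow> 0 \<in> cset Z"
  by (simp add: cset_def addcl_def)

lemma cset_uminus: "(\<And>x. x \<in> Z \<Longrightarrow> - x \<in> Z) \<Longrightarrow> p \<in> cset Z \<Longrightarrow> - p \<in> cset Z"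
  by (simp add: cset_def)

lemma cset_diff: "addcl Z \<Longrightarrow> (\<And>x. x \<in> Z \<Longrightarrow> - x \<in> Z) \<Longrightarrow> p \<in> cset Z \<Longrightarrow> q \<in> cset Z \<Longrightarrow> p - q \<in> cset Z"
  using cset_add[of Z p "-q"] cset_uminus[of Z q] by simp

lemma cset_sum: "addcl Z \<Longrightarrow> (\<And>x. x \<in> S \<Longrightarrow> f x \<in> cset Z) \<Longrightarrow> sum f S \<in> cset Z"
  by (induct S rule: infinite_finite_induct) (auto simp: cset_zero cset_add)

lemma cset_Const: "addcl Z \<Longrightarrow> c \<in> Z \<Longrightarrow> Const c \<in> cset Z"
  by (simp add: cset_def Const_def lookup_single when_def addcl_def)

lemma cset_Var: "addcl Z \<Longrightarrow> 1 \<in> Z \<Longrightarrow> Var v \<in> cset Z"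
  by (simp add: cset_def Var_def lookup_single when_def addcl_def)

lemma cset_mono: "Z1 \<subseteq> Z2 \<Longrightarrow> p \<in> cset Z1 \<Longrightarrow> p \<in> cset Z2"
  by (auto simp: cset_def)

section \<open>The two coefficient sets\<close>

definition Zc :: "int poly \<Rightarrow> rat poly set" where
  "Zc g = {(1 - GG g) * z | z. z \<in> Zg g}"

definition AA :: "int poly \<Rightarrow> mpoly set" where "AA g = cset (Zg g)"
definition BB :: "int poly \<Rightarrow> mpoly set" where "BB g = cset (Zc g)"

lemma addcl_Zg: "addcl (Zg g)"
  by (simp add: addcl_def Zg_zero Zg_add)

lemma addcl_Zc: "addcl (Zc g)"
  unfolding addcl_def Zc_def
proof (intro conjI ballI)
  show "0 \<in> {(1 - GG g) * z |z. z \<in> Zg g}" using Zg_zero by force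
  fix x y assume "x \<in> {(1 - GG g) * z |z. z \<in> Zg g}" "y \<in> {(1 - GG g) * z |z. z \<in> Zg g}"
  then obtain a b where "x = (1 - GG g) * a" "y = (1 - GG g) * b" "a \<in> Zg g" "b \<in> Zg g" by auto
  then show "x + y \<in> {(1 - GG g) * z |z. z \<in> Zg g}"
    by (auto intro!: exI[of _ "a+b"] Zg_add simp: algebra_simps)
qed

lemma Zc_uminus: assumes "x \<in> Zc g" shows "- x \<in> Zc g"
proof -
  from assms obtain z where "x = (1 - GG g) * z" "z \<in> Zg g" unfolding Zc_def by auto
  then have "- x = (1 - GG g) * (- z)" "- z \<in> Zg g" by (auto intro: Zg_uminus)
  then show ?thesis unfolding Zc_def by blast
qed

lemma Zc_sub_Zg: "Zc g \<subseteq> Zg g"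
  unfolding Zc_def by (auto intro!: Zg_mult Zg_diff Zg_one Zg_G)

lemma Zg_Zc_mult: assumes "x \<in> Zg g" "y \<in> Zc g" shows "x * y \<in> Zc g"
proof -
  from assms obtain z where "y = (1 - GG g) * z" "z \<in> Zg g" unfolding Zc_def by auto
  then have "x * y = (1 - GG g) * (x * z)" "x * z \<in> Zg g" using assms(1) by (auto intro: Zg_mult)
  then show ?thesis unfolding Zc_def by blast
qed

lemma Zc_Zg_mult: "x \<in> Zc g \<Longrightarrow> y \<in> Zg g \<Longrightarrow> x * y \<in> Zc g"
  using Zg_Zc_mult[of y g x] by (simp add: mult.commute)

lemma AA_add: "p \<in> AA g \<Longrightarrow> q \<in> AA g \<Longrightarrow> p + q \<in> AA g"
  unfolding AA_def by (rule cset_add[OF addcl_Zg])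
lemma AA_mult: "p \<in> AA g \<Longrightarrow> q \<in> AA g \<Longrightarrow> p * q \<in> AA g"
  unfolding AA_def by (rule cset_mult[OF addcl_Zg addcl_Zg addcl_Zg Zg_mult])
lemma AA_uminus: "p \<in> AA g \<Longrightarrow> - p \<in> AA g"
  unfolding AA_def by (rule cset_uminus[OF Zg_uminus])
lemma AA_diff: "p \<in> AA g \<Longrightarrow> q \<in> AA g \<Longrightarrow> p - q \<in> AA g"
  using AA_add[of p g "-q"] AA_uminus[of q g] by simp
lemma AA_zero: "0 \<in> AA g"
  unfolding AA_def by (rule cset_zero[OF addcl_Zg])
lemma AA_Const: "c \<in> Zg g \<Longrightarrow> Const c \<in> AA g"
  unfolding AA_def by (rule cset_Const[OF addcl_Zg])
lemma AA_one: "1 \<in> AA g"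
  using AA_Const[OF Zg_one] by simp
lemma AA_Var: "Var v \<in> AA g"
  unfolding AA_def by (rule cset_Var[OF addcl_Zg Zg_one])
lemma AA_sum: "(\<And>x. x \<in> S \<Longrightarrow> f x \<in> AA g) \<Longrightarrow> sum f S \<in> AA g"
  unfolding AA_def by (rule cset_sum[OF addcl_Zg])
lemma AA_power: "p \<in> AA g \<Longrightarrow> p ^ k \<in> AA g"
  by (induct k) (simp_all add: AA_one AA_mult)
lemma AA_of_nat: "of_nat k \<in> AA g"
proof -
  have "Const [:of_int (int k):] \<in> AA g" by (rule AA_Const[OF Zg_const])
  moreover have "Const [:of_int (int k):] = of_nat k"
    by (metis Const_of_nat of_int_of_nat_eq of_nat_poly)
  ultimately show ?thesis by simp
qed
lemma AA_t: "Const (GG g) \<in> AA g"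
  by (rule AA_Const[OF Zg_G])

lemma BB_add: "p \<in> BB g \<Longrightarrow> q \<in> BB g \<Longrightarrow> p + q \<in> BB g"
  unfolding BB_def by (rule cset_add[OF addcl_Zc])
lemma BB_uminus: "p \<in> BB g \<Longrightarrow> - p \<in> BB g"
  unfolding BB_def by (rule cset_uminus[OF Zc_uminus])
lemma BB_diff: "p \<in> BB g \<Longrightarrow> q \<in> BB g \<Longrightarrow> p - q \<in> BB g"
  using BB_add[of p g "-q"] BB_uminus[of q g] by simp
lemma BB_zero: "0 \<in> BB g"
  unfolding BB_def by (rule cset_zero[OF addcl_Zc])
lemma BB_sum: "(\<And>x. x \<in> S \<Longrightarrow> f x \<in> BB g) \<Longrightarrow> sum f S \<in> BB g"
  unfolding BB_def by (rule cset_sum[OF addcl_Zc])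
lemma BB_AA: "p \<in> BB g \<Longrightarrow> p \<in> AA g"
  unfolding BB_def AA_def by (rule cset_mono[OF Zc_sub_Zg])
lemma AA_BB_mult: "p \<in> AA g \<Longrightarrow> q \<in> BB g \<Longrightarrow> p * q \<in> BB g"
  unfolding AA_def BB_def by (rule cset_mult[OF addcl_Zg addcl_Zc addcl_Zc Zg_Zc_mult])
lemma BB_AA_mult: "p \<in> BB g \<Longrightarrow> q \<in> AA g \<Longrightarrow> p * q \<in> BB g"
  using AA_BB_mult[of q g p] by (simp add: mult.commute)

lemma one_minus_t_AA: "p \<in> AA g \<Longrightarrow> Const (1 - GG g) * p \<in> BB g"
  unfolding AA_def BB_def cset_def Zc_def by (auto simp: lookup_Const_mult)

lemma BB_cancel:
  assumes "GG g \<noteq> 1" "Const (1 - GG g) * p \<in> BB g"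
  shows "p \<in> AA g"
  unfolding AA_def cset_def
proof (intro CollectI allI)
  fix m
  from assms(2) obtain z where "(1 - GG g) * Poly_Mapping.lookup p m = (1 - GG g) * z" "z \<in> Zg g"
    unfolding BB_def cset_def Zc_def by (auto simp: lookup_Const_mult)
  moreover have "1 - GG g \<noteq> 0" using assms(1) by simp
  ultimately show "Poly_Mapping.lookup p m \<in> Zg g" by simp
qed



definition tt :: "int poly \<Rightarrow> mpoly" where "tt g = Const (GG g)"
definition ct :: "int poly \<Rightarrow> mpoly" where "ct g = Const (1 - GG g)"
definition qk :: "int poly \<Rightarrow> nat \<Rightarrow> mpoly" where "qk g k = Const (qint g k)"

lemma ct_eq: "ct g = 1 - tt g"
  by (simp add: ct_def tt_def Const_diff)

lemma qk_eq: "qk g k = (\<Sum>i<k. tt g ^ i)"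
  by (simp add: qk_def qint_def Const_sum Const_power tt_def GG_def)

lemma qk_0[simp]: "qk g 0 = 0" by (simp add: qk_eq)
lemma qk_Suc: "qk g (Suc k) = qk g k + tt g ^ k" by (simp add: qk_eq)
lemma qk_1[simp]: "qk g 1 = 1" by (simp add: qk_eq)

lemma ct_qk: "ct g * qk g k = 1 - tt g ^ k"
proof (induct k)
  case 0 then show ?case by simp
next
  case (Suc k)
  have "ct g * qk g (Suc k) = ct g * qk g k + ct g * tt g ^ k" by (simp add: qk_Suc distrib_left)
  also have "\<dots> = 1 - tt g ^ Suc k" using Suc by (simp add: ct_eq algebra_simps)
  finally show ?case .
qed

lemma qk_add: "qk g (a + b) = qk g a + tt g ^ a * qk g b"
proof (induct b)
  case 0 then show ?case by simp
next
  case (Suc b)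
  have "qk g (a + Suc b) = qk g (a + b) + tt g ^ (a + b)" by (simp add: qk_Suc)
  also have "\<dots> = qk g a + tt g ^ a * qk g (Suc b)" using Suc by (simp add: qk_Suc algebra_simps power_add)
  finally show ?case .
qed

lemma qk_mult: "qk g (m * s) = qk g m * (\<Sum>j<s. (tt g ^ m) ^ j)"
proof (induct s)
  case 0 then show ?case by simp
next
  case (Suc s)
  have "qk g (m * Suc s) = qk g (m * s + m)" by (simp add: algebra_simps)
  also have "\<dots> = qk g (m * s) + tt g ^ (m * s) * qk g m" by (rule qk_add)
  also have "\<dots> = qk g m * (\<Sum>j<Suc s. (tt g ^ m) ^ j)"
    using Suc by (simp add: algebra_simps power_mult)
  finally show ?case .
qed

lemma qk_AA: "qk g k \<in> AA g"
  unfolding qk_eq tt_def by (intro AA_sum AA_power AA_t)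
lemma tt_AA: "tt g \<in> AA g"
  unfolding tt_def by (rule AA_t)

lemma ct_AA_BB: "p \<in> AA g \<Longrightarrow> ct g * p \<in> BB g"
  unfolding ct_def by (rule one_minus_t_AA)

lemma of_nat_cancel_mpoly:
  assumes "of_nat k * (x::mpoly) = of_nat k * y" "k > 0"
  shows "x = y"
proof (rule poly_mapping_eqI)
  fix m
  have "Poly_Mapping.lookup (Const (of_nat k) * x) m = Poly_Mapping.lookup (Const (of_nat k) * y) m"
    using assms(1) by (simp add: Const_of_nat)
  then have "of_nat k * Poly_Mapping.lookup x m = (of_nat k :: rat poly) * Poly_Mapping.lookup y m"
    by (simp add: lookup_Const_mult)
  then show "Poly_Mapping.lookup x m = Poly_Mapping.lookup y m" using assms(2) by simp
qed

definition Wser :: "int poly \<Rightarrow> (nat \<Rightarrow> mpoly) \<Rightarrow> mpoly fps" where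
  "Wser g w = Abs_fps (\<lambda>n. if n = 0 then 0 else ct g * w n)"

definition GoodE :: "int poly \<Rightarrow> (nat \<Rightarrow> mpoly) \<Rightarrow> bool" where
  "GoodE g w \<longleftrightarrow> (\<exists>E. fps_nth E 0 = 1 \<and> (\<forall>n\<ge>1. fps_nth E n \<in> BB g) \<and> fps_X * fps_deriv E = Wser g w * E)"

lemma XD_nth: "fps_nth (fps_X * fps_deriv E) n = of_nat n * fps_nth E n"
  by (cases n) (simp_all)

lemma coef_AA: "fps_nth E 0 = 1 \<Longrightarrow> \<forall>n\<ge>1. fps_nth E n \<in> BB g \<Longrightarrow> fps_nth E k \<in> AA g"
  by (cases k) (auto intro: BB_AA AA_one)

lemma Wser_cong: "(\<And>n. n \<ge> 1 \<Longrightarrow> w n = w' n) \<Longrightarrow> Wser g w = Wser g w'"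
  unfolding Wser_def by (rule arg_cong[where f=Abs_fps]) (auto simp: fun_eq_iff)

lemma GoodE_cong: "GoodE g w \<Longrightarrow> (\<And>n. n \<ge> 1 \<Longrightarrow> w n = w' n) \<Longrightarrow> GoodE g w'"
  unfolding GoodE_def using Wser_cong[of w w' g] by metis

lemma GoodE_zero: "GoodE g (\<lambda>_. 0)"
proof -
  have "Wser g (\<lambda>_. 0) = 0" unfolding Wser_def by (rule fps_ext) simp
  then show ?thesis unfolding GoodE_def by (intro exI[of _ 1]) (auto simp: BB_zero)
qed

lemma mult_coef_BB:
  assumes "fps_nth E1 0 = 1" "\<forall>n\<ge>1. fps_nth E1 n \<in> BB g" "fps_nth E2 0 = 1" "\<forall>n\<ge>1. fps_nth E2 n \<in> BB g" "n \<ge> 1"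
  shows "fps_nth (E1 * E2) n \<in> BB g"
  unfolding fps_mult_nth
proof (rule BB_sum)
  fix i assume i: "i \<in> {0..n}"
  show "fps_nth E1 i * fps_nth E2 (n - i) \<in> BB g"
  proof (cases "i = 0")
    case True then show ?thesis using assms by simp
  next
    case False then show ?thesis
      using assms by (intro BB_AA_mult coef_AA[of E2]) auto
  qed
qed

lemma GoodE_add:
  assumes "GoodE g w1" "GoodE g w2"
  shows "GoodE g (\<lambda>n. w1 n + w2 n)"
proof -
  obtain E1 where E1: "fps_nth E1 0 = 1" "\<forall>n\<ge>1. fps_nth E1 n \<in> BB g" "fps_X * fps_deriv E1 = Wser g w1 * E1"
    using assms(1) unfolding GoodE_def by blast
  obtain E2 where E2: "fps_nth E2 0 = 1" "\<forall>n\<ge>1. fps_nth E2 n \<in> BB g" "fps_X * fps_deriv E2 = Wser g w2 * E2"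
    using assms(2) unfolding GoodE_def by blast
  have W: "Wser g (\<lambda>n. w1 n + w2 n) = Wser g w1 + Wser g w2"
    unfolding Wser_def by (rule fps_ext) (simp add: algebra_simps)
  have "fps_X * fps_deriv (E1 * E2) = E1 * (fps_X * fps_deriv E2) + (fps_X * fps_deriv E1) * E2"
    by (simp add: algebra_simps)
  also have "\<dots> = Wser g (\<lambda>n. w1 n + w2 n) * (E1 * E2)"
    unfolding E1(3) E2(3) W by (simp add: algebra_simps)
  finally show ?thesis unfolding GoodE_def
    using E1 E2 mult_coef_BB[of E1 g E2]
    by (intro exI[of _ "E1 * E2"]) (auto simp: fps_mult_nth)
qed

lemma inv_coef_BB:
  assumes "fps_nth E 0 = 1" "\<forall>n\<ge>1. fps_nth E n \<in> BB g"
  shows "n \<ge> 1 \<Longrightarrow> fps_nth (fps_right_inverse E 1) n \<in> BB g"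
proof (induct n rule: less_induct)
  case (less n)
  then obtain m where m: "n = Suc m" by (cases n) auto
  have AAk: "fps_nth (fps_right_inverse E 1) k \<in> AA g" if "k < n" for k
  proof (cases "k = 0")
    case True then show ?thesis by (simp add: AA_one)
  next
    case False then show ?thesis using less that by (intro BB_AA) auto
  qed
  have "fps_nth (fps_right_inverse E 1) n =
     - 1 * (\<Sum>i\<in>{1..Suc m}. fps_nth E i * fps_right_inverse_constructor E 1 (Suc m - i))"
    by (simp add: m)
  also have "\<dots> \<in> BB g"
  proof -
    have "(\<Sum>i\<in>{1..Suc m}. fps_nth E i * fps_right_inverse_constructor E 1 (Suc m - i)) \<in> BB g"
    proof (rule BB_sum)
      fix i assume "i \<in> {1..Suc m}"
      then show "fps_nth E i * fps_right_inverse_constructor E 1 (Suc m - i) \<in> BB g"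
        using assms AAk[of "Suc m - i"] m by (intro BB_AA_mult) auto
    qed
    then show ?thesis by (simp only: mult_minus1) (rule BB_uminus)
  qed
  finally show ?case .
qed

lemma GoodE_uminus:
  assumes "GoodE g w"
  shows "GoodE g (\<lambda>n. - w n)"
proof -
  obtain E where E: "fps_nth E 0 = 1" "\<forall>n\<ge>1. fps_nth E n \<in> BB g" "fps_X * fps_deriv E = Wser g w * E"
    using assms unfolding GoodE_def by blast
  define D where "D = fps_right_inverse E 1"
  have ED: "E * D = 1" unfolding D_def by (rule fps_right_inverse) (simp add: E(1))
  have W: "Wser g (\<lambda>n. - w n) = - Wser g w"
    unfolding Wser_def by (rule fps_ext) simp
  have d: "E * fps_deriv D = - (fps_deriv E * D)"
  proof -
    have "fps_deriv (E * D) = 0" using ED by simp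
    then show ?thesis by (simp add: algebra_simps add_eq_0_iff)
  qed
  have "fps_X * fps_deriv D = (fps_X * fps_deriv D) * (E * D)" using ED by simp
  also have "\<dots> = D * (fps_X * (E * fps_deriv D))" by (simp add: algebra_simps)
  also have "\<dots> = - D * ((fps_X * fps_deriv E) * D)" unfolding d by (simp add: algebra_simps)
  also have "\<dots> = - (Wser g w * (E * D)) * D" unfolding E(3) by (simp add: algebra_simps)
  also have "\<dots> = Wser g (\<lambda>n. - w n) * D" unfolding ED W by simp
  finally have X: "fps_X * fps_deriv D = Wser g (\<lambda>n. - w n) * D" .
  have "fps_nth D 0 = 1" unfolding D_def by simp
  moreover have "\<forall>n\<ge>1. fps_nth D n \<in> BB g" unfolding D_def using inv_coef_BB[OF E(1,2)] by blast
  ultimately show ?thesis unfolding GoodE_def using X by blast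
qed

lemma GoodE_diff: "GoodE g w1 \<Longrightarrow> GoodE g w2 \<Longrightarrow> GoodE g (\<lambda>n. w1 n - w2 n)"
  using GoodE_add[of g w1 "\<lambda>n. - w2 n"] GoodE_uminus[of g w2] by simp

lemma GoodE_sum:
  assumes "finite S" "\<And>i. i \<in> S \<Longrightarrow> GoodE g (w i)"
  shows "GoodE g (\<lambda>n. \<Sum>i\<in>S. w i n)"
  using assms
proof (induct S rule: finite_induct)
  case empty then show ?case using GoodE_zero by simp
next
  case (insert x F)
  then show ?case using GoodE_add[of g "w x" "\<lambda>n. \<Sum>i\<in>F. w i n"] by simp
qed

lemma GoodE_of_nat_mult: "GoodE g w \<Longrightarrow> GoodE g (\<lambda>n. of_nat k * w n)"
proof (induct k)
  case 0 then show ?case using GoodE_zero by simp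
next
  case (Suc k)
  then show ?case using GoodE_add[of g w "\<lambda>n. of_nat k * w n"] by (simp add: algebra_simps)
qed



definition dil :: "nat \<Rightarrow> 'a::comm_ring_1 fps \<Rightarrow> 'a fps" where
  "dil d f = Abs_fps (\<lambda>n. if d dvd n then fps_nth f (n div d) else 0)"

lemma dil_nth: "fps_nth (dil d f) n = (if d dvd n then fps_nth f (n div d) else 0)"
  by (simp add: dil_def)

lemma dil_mult:
  assumes "d > 0"
  shows "dil d (f * g) = dil d f * dil d g"
proof (rule fps_ext)
  fix n
  show "fps_nth (dil d (f * g)) n = fps_nth (dil d f * dil d g) n"
  proof (cases "d dvd n")
    case True
    then obtain m where n: "n = d * m" by blast
    have "fps_nth (dil d f * dil d g) n =
        (\<Sum>i=0..n. (if d dvd i then fps_nth f (i div d) else 0) * (if d dvd (n - i) then fps_nth g ((n - i) div d) else 0))"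
      by (simp add: fps_mult_nth dil_nth)
    also have "\<dots> = (\<Sum>i\<in>(\<lambda>j. d * j) ` {0..m}. fps_nth f (i div d) * fps_nth g ((n - i) div d))"
    proof (rule sum.mono_neutral_cong_right)
      show "finite {0..n}" by simp
      show "(\<lambda>j. d * j) ` {0..m} \<subseteq> {0..n}" using n by auto
      show "\<forall>i\<in>{0..n} - (\<lambda>j. d * j) ` {0..m}.
        (if d dvd i then fps_nth f (i div d) else 0) * (if d dvd (n - i) then fps_nth g ((n - i) div d) else 0) = 0"
      proof
        fix i assume "i \<in> {0..n} - (\<lambda>j. d * j) ` {0..m}"
        then have "\<not> d dvd i" using n assms by (auto simp: dvd_def)
        then show "(if d dvd i then fps_nth f (i div d) else 0) * (if d dvd (n - i) then fps_nth g ((n - i) div d) else 0) = 0" by simp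
      qed
      fix i assume "i \<in> (\<lambda>j. d * j) ` {0..m}"
      then obtain j where j: "i = d * j" "j \<in> {0..m}" by (rule imageE)
      have "n - i = d * (m - j)" using j n by (simp add: diff_mult_distrib2)
      then show "(if d dvd i then fps_nth f (i div d) else 0) * (if d dvd (n - i) then fps_nth g ((n - i) div d) else 0)
          = fps_nth f (i div d) * fps_nth g ((n - i) div d)" using j by simp
    qed
    also have "\<dots> = (\<Sum>j\<in>{0..m}. fps_nth f (d * j div d) * fps_nth g ((n - d * j) div d))"
      using assms by (subst sum.reindex) (auto simp: inj_on_def)
    also have "\<dots> = (\<Sum>j=0..m. fps_nth f j * fps_nth g (m - j))"
      using assms n by (intro sum.cong) (auto simp: diff_mult_distrib2[symmetric])
    also have "\<dots> = fps_nth (dil d (f * g)) n"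
      using True n assms by (simp add: dil_nth fps_mult_nth)
    finally show ?thesis by simp
  next
    case False
    have "fps_nth (dil d f * dil d g) n = 0"
      unfolding fps_mult_nth dil_nth
    proof (rule sum.neutral, rule ballI)
      fix i assume "i \<in> {0..n}"
      then have "\<not> (d dvd i \<and> d dvd (n - i))" using False
        by (metis atLeastAtMost_iff dvd_add le_add_diff_inverse)
      then show "(if d dvd i then fps_nth f (i div d) else 0) * (if d dvd (n - i) then fps_nth g ((n - i) div d) else 0) = 0"
        by auto
    qed
    then show ?thesis using False by (simp add: dil_nth)
  qed
qed

lemma dil_XD:
  "fps_X * fps_deriv (dil d f) = fps_const (of_nat d) * dil d (fps_X * fps_deriv f)"
proof (rule fps_ext)
  fix n
  show "fps_nth (fps_X * fps_deriv (dil d f)) n = fps_nth (fps_const (of_nat d) * dil d (fps_X * fps_deriv f)) n"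
  proof (cases "d dvd n")
    case True
    then obtain m where "n = d * m" by blast
    then show ?thesis unfolding XD_nth by (cases "d = 0") (simp_all add: dil_nth XD_nth algebra_simps)
  next
    case False then show ?thesis unfolding XD_nth by (simp add: dil_nth XD_nth)
  qed
qed

section \<open>The basic series for d = 1\<close>

definition Hs :: "int poly \<Rightarrow> mpoly \<Rightarrow> mpoly fps" where
  "Hs g a = Abs_fps (\<lambda>n. if n = 0 then 1 else ct g * a ^ n)"
definition Vs :: "int poly \<Rightarrow> mpoly \<Rightarrow> mpoly fps" where
  "Vs g a = Abs_fps (\<lambda>n. if n = 0 then 0 else ct g * (qk g n * a ^ n))"

lemma key_identity: "qk g (Suc m) + (\<Sum>i\<in>{1..m}. ct g * qk g i) = of_nat (Suc m)"
proof (induct m)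
  case 0 then show ?case by (simp add: qk_Suc)
next
  case (Suc m)
  have "qk g (Suc (Suc m)) + (\<Sum>i\<in>{1..Suc m}. ct g * qk g i)
      = (qk g (Suc m) + (\<Sum>i\<in>{1..m}. ct g * qk g i)) + tt g ^ Suc m + ct g * qk g (Suc m)"
    by (simp add: qk_Suc[of g "Suc m"] algebra_simps)
  also have "\<dots> = of_nat (Suc (Suc m))" unfolding Suc by (simp add: ct_qk)
  finally show ?case .
qed

lemma Hs_eq: "fps_X * fps_deriv (Hs g a) = Vs g a * Hs g a"
proof (rule fps_ext)
  fix n
  show "fps_nth (fps_X * fps_deriv (Hs g a)) n = fps_nth (Vs g a * Hs g a) n"
  proof (cases n)
    case 0 then show ?thesis by (simp add: XD_nth fps_mult_nth Vs_def)
  next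
    case (Suc m)
    have "fps_nth (Vs g a * Hs g a) n = (\<Sum>i=0..Suc m. fps_nth (Vs g a) i * fps_nth (Hs g a) (Suc m - i))"
      by (simp add: fps_mult_nth Suc)
    also have "\<dots> = (\<Sum>i=0..m. fps_nth (Vs g a) i * fps_nth (Hs g a) (Suc m - i)) + ct g * (qk g (Suc m) * a ^ Suc m)"
      by (simp add: Vs_def Hs_def)
    also have "(\<Sum>i=0..m. fps_nth (Vs g a) i * fps_nth (Hs g a) (Suc m - i)) = (\<Sum>i\<in>{1..m}. ct g * a ^ Suc m * (ct g * qk g i))"
    proof -
      have "(\<Sum>i=0..m. fps_nth (Vs g a) i * fps_nth (Hs g a) (Suc m - i)) = (\<Sum>i\<in>{1..m}. fps_nth (Vs g a) i * fps_nth (Hs g a) (Suc m - i))"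
        by (rule sum.mono_neutral_right) (auto simp: Vs_def)
      also have "\<dots> = (\<Sum>i\<in>{1..m}. ct g * a ^ Suc m * (ct g * qk g i))"
      proof (rule sum.cong)
        fix i assume i: "i \<in> {1..m}"
        have pow: "a ^ i * a ^ (Suc m - i) = a ^ Suc m" using i by (simp add: power_add[symmetric])
        have "fps_nth (Vs g a) i * fps_nth (Hs g a) (Suc m - i) = (ct g * ct g * qk g i) * (a ^ i * a ^ (Suc m - i))"
          using i by (simp add: Vs_def Hs_def ac_simps)
        also have "\<dots> = (ct g * ct g * qk g i) * a ^ Suc m" by (simp only: pow)
        also have "\<dots> = ct g * a ^ Suc m * (ct g * qk g i)" by (simp only: ac_simps)
        finally show "fps_nth (Vs g a) i * fps_nth (Hs g a) (Suc m - i) = ct g * a ^ Suc m * (ct g * qk g i)" .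
      qed simp
      finally show ?thesis .
    qed
    also have "(\<Sum>i\<in>{1..m}. ct g * a ^ Suc m * (ct g * qk g i)) + ct g * (qk g (Suc m) * a ^ Suc m)
       = ct g * a ^ Suc m * (\<Sum>i\<in>{1..m}. ct g * qk g i) + ct g * (qk g (Suc m) * a ^ Suc m)"
      by (simp only: sum_distrib_left)
    also have "\<dots> = ct g * a ^ Suc m * (qk g (Suc m) + (\<Sum>i\<in>{1..m}. ct g * qk g i))"
      by (simp only: algebra_simps)
    also have "\<dots> = of_nat n * fps_nth (Hs g a) n"
      unfolding key_identity by (simp add: Suc Hs_def algebra_simps)
    finally show ?thesis by (simp add: XD_nth)
  qed
qed

definition ghs :: "int poly \<Rightarrow> nat \<Rightarrow> mpoly \<Rightarrow> nat \<Rightarrow> mpoly" where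
  "ghs g d a n = (if d dvd n then of_nat d * qk g (n div d) * a ^ (n div d) else 0)"

lemma GoodE_ghs:
  assumes "d > 0" "a \<in> AA g"
  shows "GoodE g (ghs g d a)"
proof -
  define E where "E = dil d (Hs g a)"
  have W: "Wser g (ghs g d a) = fps_const (of_nat d) * dil d (Vs g a)"
  proof (rule fps_ext)
    fix n
    show "fps_nth (Wser g (ghs g d a)) n = fps_nth (fps_const (of_nat d) * dil d (Vs g a)) n"
    proof (cases "d dvd n")
      case True
      then obtain m where "n = d * m" by blast
      then show ?thesis using assms(1) by (simp add: Wser_def ghs_def dil_nth Vs_def algebra_simps)
    next
      case False
      then show ?thesis by (auto simp: Wser_def ghs_def dil_nth)
    qed
  qed
  have "fps_X * fps_deriv E = fps_const (of_nat d) * dil d (Vs g a * Hs g a)"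
    unfolding E_def dil_XD Hs_eq ..
  also have "\<dots> = Wser g (ghs g d a) * E"
    unfolding W E_def dil_mult[OF assms(1)] by (simp add: algebra_simps)
  finally have X: "fps_X * fps_deriv E = Wser g (ghs g d a) * E" .
  have E0: "fps_nth E 0 = 1" by (simp add: E_def dil_nth Hs_def)
  have EB: "\<forall>n\<ge>1. fps_nth E n \<in> BB g"
  proof (intro allI impI)
    fix n :: nat assume n: "n \<ge> 1"
    show "fps_nth E n \<in> BB g"
    proof (cases "d dvd n")
      case True
      then have "n div d \<noteq> 0" using n assms(1) by (auto elim: dvdE)
      then show ?thesis using True by (simp add: E_def dil_nth Hs_def ct_AA_BB AA_power assms(2))
    next
      case False then show ?thesis by (simp add: E_def dil_nth BB_zero)
    qed
  qed
  show ?thesis unfolding GoodE_def using E0 EB X by blast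
qed



lemma ghost_repr:
  assumes "1 \<le> n" "n \<le> N"
  shows "ghost g F n = (\<Sum>d\<in>{1..N}. ghs g d (F d) n)"
proof -
  have set: "{d. d dvd n} = {d\<in>{1..N}. d dvd n}"
  proof (intro set_eqI iffI)
    fix d assume "d \<in> {d. d dvd n}"
    then have "d dvd n" by simp
    moreover have "d \<noteq> 0" using \<open>d dvd n\<close> assms(1) by (intro notI) simp
    moreover have "d \<le> n" using \<open>d dvd n\<close> assms(1) by (intro dvd_imp_le) simp_all
    ultimately show "d \<in> {d\<in>{1..N}. d dvd n}" using assms(2) by simp
  qed simp
  have "ghost g F n = (\<Sum>d\<in>{d\<in>{1..N}. d dvd n}. of_nat d * Const (qint g (n div d)) * F d ^ (n div d))"
    unfolding ghost_def set ..
  also have "\<dots> = (\<Sum>d\<in>{1..N}. if d dvd n then of_nat d * Const (qint g (n div d)) * F d ^ (n div d) else 0)"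
    by (rule sum.inter_filter) simp
  also have "\<dots> = (\<Sum>d\<in>{1..N}. ghs g d (F d) n)"
    unfolding ghs_def qk_def ..
  finally show ?thesis .
qed

definition Good :: "int poly \<Rightarrow> (nat \<Rightarrow> mpoly) \<Rightarrow> bool" where
  "Good g w \<longleftrightarrow> (\<forall>N. \<exists>w'. (\<forall>n. 1 \<le> n \<and> n \<le> N \<longrightarrow> w' n = w n) \<and> GoodE g w')"

lemma GoodE_ghs_sum:
  assumes "finite D" "\<And>d. d \<in> D \<Longrightarrow> d > 0 \<and> F d \<in> AA g"
  shows "GoodE g (\<lambda>n. \<Sum>d\<in>D. ghs g d (F d) n)"
  using assms by (intro GoodE_sum GoodE_ghs) auto

lemma Good_ghost:
  assumes "\<And>d. d \<ge> 1 \<Longrightarrow> F d \<in> AA g"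
  shows "Good g (ghost g F)"
  unfolding Good_def
proof
  fix N
  show "\<exists>w'. (\<forall>n. 1 \<le> n \<and> n \<le> N \<longrightarrow> w' n = ghost g F n) \<and> GoodE g w'"
  proof (intro exI[of _ "\<lambda>n. \<Sum>d\<in>{1..N}. ghs g d (F d) n"] conjI allI impI)
    fix n assume "1 \<le> n \<and> n \<le> N"
    then show "(\<Sum>d\<in>{1..N}. ghs g d (F d) n) = ghost g F n" using ghost_repr[of n N g F] by simp
  next
    show "GoodE g (\<lambda>n. \<Sum>d\<in>{1..N}. ghs g d (F d) n)"
      using assms by (intro GoodE_ghs_sum) auto
  qed
qed

lemma Good_add:
  assumes "Good g w1" "Good g w2"
  shows "Good g (\<lambda>n. w1 n + w2 n)"
  unfolding Good_def
proof
  fix N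
  obtain v1 where v1: "\<forall>n. 1 \<le> n \<and> n \<le> N \<longrightarrow> v1 n = w1 n" "GoodE g v1"
    using assms(1) unfolding Good_def by blast
  obtain v2 where v2: "\<forall>n. 1 \<le> n \<and> n \<le> N \<longrightarrow> v2 n = w2 n" "GoodE g v2"
    using assms(2) unfolding Good_def by blast
  have "GoodE g (\<lambda>n. v1 n + v2 n)" using v1(2) v2(2) by (rule GoodE_add)
  moreover have "\<forall>n. 1 \<le> n \<and> n \<le> N \<longrightarrow> v1 n + v2 n = w1 n + w2 n" using v1(1) v2(1) by simp
  ultimately show "\<exists>w'. (\<forall>n. 1 \<le> n \<and> n \<le> N \<longrightarrow> w' n = w1 n + w2 n) \<and> GoodE g w'"
    by (intro exI[of _ "\<lambda>n. v1 n + v2 n"] conjI) simp_all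
qed

lemma Good_uminus:
  assumes "Good g w"
  shows "Good g (\<lambda>n. - w n)"
  unfolding Good_def
proof
  fix N
  obtain v where v: "\<forall>n. 1 \<le> n \<and> n \<le> N \<longrightarrow> v n = w n" "GoodE g v"
    using assms(1) unfolding Good_def by blast
  have "GoodE g (\<lambda>n. - v n)" using v(2) by (rule GoodE_uminus)
  moreover have "\<forall>n. 1 \<le> n \<and> n \<le> N \<longrightarrow> - v n = - w n" using v(1) by simp
  ultimately show "\<exists>w'. (\<forall>n. 1 \<le> n \<and> n \<le> N \<longrightarrow> w' n = - w n) \<and> GoodE g w'"
    by (intro exI[of _ "\<lambda>n. - v n"] conjI) simp_all
qed

lemma Good_cong:
  assumes "Good g w" "\<And>n. n \<ge> 1 \<Longrightarrow> w n = w' n"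
  shows "Good g w'"
  unfolding Good_def
proof
  fix N
  obtain v where v: "\<forall>n. 1 \<le> n \<and> n \<le> N \<longrightarrow> v n = w n" "GoodE g v"
    using assms(1) unfolding Good_def by blast
  then have "\<forall>n. 1 \<le> n \<and> n \<le> N \<longrightarrow> v n = w' n" using assms(2) by simp
  with v(2) show "\<exists>w''. (\<forall>n. 1 \<le> n \<and> n \<le> N \<longrightarrow> w'' n = w' n) \<and> GoodE g w''"
    by blast
qed

section \<open>Comparison of two solutions\<close>

lemma LD_nth:
  assumes "fps_X * fps_deriv E = W * E"
  shows "of_nat k * fps_nth E k = (\<Sum>i=0..k. fps_nth W i * fps_nth E (k - i))"
proof -
  have "of_nat k * fps_nth E k = fps_nth (W * E) k"
    using arg_cong[OF assms, of "\<lambda>f. fps_nth f k"] by (simp only: XD_nth)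
  then show ?thesis by (simp only: fps_mult_nth)
qed

lemma LD_compare:
  fixes E D W V :: "mpoly fps"
  assumes E: "fps_X * fps_deriv E = W * E" and D: "fps_X * fps_deriv D = V * D"
    and E0: "fps_nth E 0 = 1" and D0: "fps_nth D 0 = 1"
    and W0: "fps_nth W 0 = 0" and V0: "fps_nth V 0 = 0"
    and WV: "\<And>k. k < n \<Longrightarrow> fps_nth W k = fps_nth V k"
  shows "of_nat n * (fps_nth E n - fps_nth D n) = fps_nth W n - fps_nth V n"
proof -
  have ED: "fps_nth E k = fps_nth D k" if "k < n" for k
    using that
  proof (induct k rule: less_induct)
    case (less k)
    show ?case
    proof (cases "k = 0")
      case True then show ?thesis using E0 D0 by simp
    next
      case False
      have "of_nat k * fps_nth E k = (\<Sum>i=0..k. fps_nth W i * fps_nth E (k - i))" by (rule LD_nth[OF E])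
      also have "\<dots> = (\<Sum>i=0..k. fps_nth V i * fps_nth D (k - i))"
      proof (rule sum.cong)
        fix i assume i: "i \<in> {0..k}"
        show "fps_nth W i * fps_nth E (k - i) = fps_nth V i * fps_nth D (k - i)"
        proof (cases "i = 0")
          case True then show ?thesis using W0 V0 by simp
        next
          case False
          have "fps_nth W i = fps_nth V i" using WV[of i] i less.prems by simp
          moreover have "fps_nth E (k - i) = fps_nth D (k - i)"
            using less.hyps[of "k - i"] i False less.prems by simp
          ultimately show ?thesis by simp
        qed
      qed simp
      also have "\<dots> = of_nat k * fps_nth D k" by (rule LD_nth[OF D, symmetric])
      finally have "of_nat k * fps_nth E k = of_nat k * fps_nth D k" .
      then show ?thesis by (rule of_nat_cancel_mpoly) (use False in simp)
    qed
  qed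
  have "of_nat n * (fps_nth E n - fps_nth D n) =
      (\<Sum>i=0..n. fps_nth W i * fps_nth E (n - i)) - (\<Sum>i=0..n. fps_nth V i * fps_nth D (n - i))"
    by (simp add: LD_nth[OF E] LD_nth[OF D] right_diff_distrib)
  also have "\<dots> = (\<Sum>i=0..n. fps_nth W i * fps_nth E (n - i) - fps_nth V i * fps_nth D (n - i))"
    by (simp add: sum_subtractf)
  also have "\<dots> = (\<Sum>i=0..n. if i = n then fps_nth W n - fps_nth V n else 0)"
  proof (rule sum.cong)
    fix i assume i: "i \<in> {0..n}"
    show "fps_nth W i * fps_nth E (n - i) - fps_nth V i * fps_nth D (n - i) = (if i = n then fps_nth W n - fps_nth V n else 0)"
    proof (cases "i = n")
      case True then show ?thesis using E0 D0 by simp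
    next
      case False
      show ?thesis
      proof (cases "i = 0")
        case True then show ?thesis using W0 V0 False by simp
      next
        case f2: False
        have "fps_nth W i = fps_nth V i" using WV[of i] i False by simp
        moreover have "fps_nth E (n - i) = fps_nth D (n - i)" using ED[of "n - i"] i f2 by simp
        ultimately show ?thesis using False by simp
      qed
    qed
  qed simp
  also have "\<dots> = fps_nth W n - fps_nth V n" by simp
  finally show ?thesis .
qed

lemma ghs_self: "n > 0 \<Longrightarrow> ghs g n a n = of_nat n * a"
  by (simp add: ghs_def qk_eq)

lemma integral_step:
  assumes g1: "GG g \<noteq> 1" and good: "Good g (ghost g F)"
    and prev: "\<And>d. 0 < d \<Longrightarrow> d < n \<Longrightarrow> F d \<in> AA g" and n: "n \<ge> 1"
  shows "F n \<in> AA g"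
proof -
  obtain w' where w': "\<forall>k. 1 \<le> k \<and> k \<le> n \<longrightarrow> w' k = ghost g F k" "GoodE g w'"
    using good unfolding Good_def by blast
  obtain E where E: "fps_nth E 0 = 1" "\<forall>k\<ge>1. fps_nth E k \<in> BB g" "fps_X * fps_deriv E = Wser g w' * E"
    using w'(2) unfolding GoodE_def by blast
  define w'' where "w'' = (\<lambda>k. \<Sum>d\<in>{1..n-1}. ghs g d (F d) k)"
  have "GoodE g w''" unfolding w''_def using prev n by (intro GoodE_ghs_sum) auto
  then obtain D where D: "fps_nth D 0 = 1" "\<forall>k\<ge>1. fps_nth D k \<in> BB g" "fps_X * fps_deriv D = Wser g w'' * D"
    unfolding GoodE_def by blast
  have agree: "w'' k = ghost g F k" if "1 \<le> k" "k < n" for k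
    unfolding w''_def using that by (subst ghost_repr[of k "n - 1"]) auto
  have atn: "ghost g F n = of_nat n * F n + w'' n"
  proof -
    have seteq: "{1..n} = insert n {1..n-1}" using n by auto
    have "(\<Sum>d\<in>insert n {1..n-1}. ghs g d (F d) n) = ghs g n (F n) n + (\<Sum>d\<in>{1..n-1}. ghs g d (F d) n)"
      by (rule sum.insert) (use n in simp_all)
    then have "(\<Sum>d\<in>{1..n}. ghs g d (F d) n) = ghs g n (F n) n + w'' n"
      unfolding w''_def by (subst seteq)
    then have "ghost g F n = ghs g n (F n) n + w'' n"
      using ghost_repr[of n n g F] n by simp
    then show ?thesis using n by (simp add: ghs_self)
  qed
  have "of_nat n * (fps_nth E n - fps_nth D n) = fps_nth (Wser g w') n - fps_nth (Wser g w'') n"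
  proof (rule LD_compare[OF E(3) D(3) E(1) D(1)])
    show "fps_nth (Wser g w') 0 = 0" "fps_nth (Wser g w'') 0 = 0" by (simp_all add: Wser_def)
    fix k assume "k < n"
    then show "fps_nth (Wser g w') k = fps_nth (Wser g w'') k"
      using w'(1) agree[of k] by (auto simp: Wser_def)
  qed
  also have "\<dots> = of_nat n * (ct g * F n)"
    using n w'(1) atn by (simp add: Wser_def algebra_simps)
  finally have "of_nat n * (fps_nth E n - fps_nth D n) = of_nat n * (ct g * F n)" .
  then have "fps_nth E n - fps_nth D n = ct g * F n"
    by (rule of_nat_cancel_mpoly) (use n in simp)
  moreover have "fps_nth E n - fps_nth D n \<in> BB g" using E(2) D(2) n by (intro BB_diff) auto
  ultimately have "Const (1 - GG g) * F n \<in> BB g" by (simp add: ct_def)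
  then show ?thesis by (rule BB_cancel[OF g1])
qed

lemma integral_all:
  assumes "GG g \<noteq> 1" "Good g (ghost g F)"
  shows "n \<ge> 1 \<Longrightarrow> F n \<in> AA g"
proof (induct n rule: less_induct)
  case (less n)
  show ?case by (rule integral_step[OF assms]) (use less in auto)
qed



lemma prod_ident:
  fixes a b :: mpoly and d e n :: nat and g :: "int poly"
  assumes d: "d > 0" and e: "e > 0"
  defines "l \<equiv> lcm d e"
  defines "r \<equiv> l div d"
  defines "s \<equiv> l div e"
  defines "\<alpha> \<equiv> a ^ r * b ^ s"
  shows "ct g * ghs g d a n * ghs g e b n =
    of_nat (gcd d e) * (\<Sum>j<s. ghs g l (tt g ^ j * \<alpha>) n - ghs g l (tt g ^ (r + j) * \<alpha>) n)"
proof (cases "l dvd n")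
  case False
  then have "\<not> (d dvd n \<and> e dvd n)" unfolding l_def using lcm_least by blast
  then show ?thesis using False by (auto simp: ghs_def)
next
  case True
  then obtain m where n: "n = l * m" by blast
  have lpos: "l > 0" using d e by (simp add: l_def lcm_pos_nat)
  have hr: "l = d * r" unfolding r_def l_def by simp
  have hs: "l = e * s" unfolding s_def l_def by simp
  have dn: "d dvd n" "n div d = r * m" using n hr d by auto
  have en: "e dvd n" "n div e = s * m" using n hs e by auto
  have ln: "n div l = m" using n lpos by simp
  define u where "u = tt g ^ m"
  define Su where "Su = (\<Sum>j<s. u ^ j)"
  have de: "of_nat d * of_nat e = (of_nat (gcd d e) * of_nat l :: mpoly)"
    unfolding l_def by (metis of_nat_mult prod_gcd_lcm_nat)
  have am: "\<alpha> ^ m = a ^ (r * m) * b ^ (s * m)"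
    unfolding \<alpha>_def by (simp add: power_mult_distrib power_mult)
  have rhs: "(\<Sum>j<s. ghs g l (tt g ^ j * \<alpha>) n - ghs g l (tt g ^ (r + j) * \<alpha>) n)
      = of_nat l * qk g m * \<alpha> ^ m * (1 - u ^ r) * Su"
  proof -
    have "(\<Sum>j<s. ghs g l (tt g ^ j * \<alpha>) n - ghs g l (tt g ^ (r + j) * \<alpha>) n)
        = (\<Sum>j<s. of_nat l * qk g m * \<alpha> ^ m * (1 - u ^ r) * u ^ j)"
    proof (rule sum.cong)
      fix j
      have "(tt g ^ j * \<alpha>) ^ m = u ^ j * \<alpha> ^ m"
        unfolding u_def by (simp add: power_mult_distrib power_mult[symmetric] mult.commute)
      moreover have "(tt g ^ (r + j) * \<alpha>) ^ m = u ^ r * u ^ j * \<alpha> ^ m"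
        unfolding u_def by (simp add: power_mult_distrib power_mult[symmetric] power_add mult.commute)
      ultimately show "ghs g l (tt g ^ j * \<alpha>) n - ghs g l (tt g ^ (r + j) * \<alpha>) n
          = of_nat l * qk g m * \<alpha> ^ m * (1 - u ^ r) * u ^ j"
        using True ln by (simp add: ghs_def algebra_simps)
    qed simp
    also have "\<dots> = of_nat l * qk g m * \<alpha> ^ m * (1 - u ^ r) * Su"
      unfolding Su_def by (simp add: sum_distrib_left)
    finally show ?thesis .
  qed
  have lhs: "ct g * ghs g d a n * ghs g e b n
      = of_nat d * of_nat e * qk g m * \<alpha> ^ m * (1 - u ^ r) * Su"
  proof -
    have q1: "ct g * qk g (r * m) = 1 - u ^ r"
      unfolding ct_qk u_def by (simp add: power_mult[symmetric] mult.commute)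
    have q2: "qk g (s * m) = qk g m * Su"
      unfolding Su_def u_def using qk_mult[of g m s] by (simp add: mult.commute)
    have "ct g * ghs g d a n * ghs g e b n
        = of_nat d * of_nat e * (ct g * qk g (r * m)) * qk g (s * m) * (a ^ (r * m) * b ^ (s * m))"
      using dn en by (simp add: ghs_def algebra_simps)
    also have "\<dots> = of_nat d * of_nat e * qk g m * \<alpha> ^ m * (1 - u ^ r) * Su"
      unfolding q1 q2 am by (simp add: algebra_simps)
    finally show ?thesis .
  qed
  show ?thesis unfolding lhs rhs de by (simp add: algebra_simps)
qed

lemma GoodE_pair:
  assumes "d > 0" "e > 0" "a \<in> AA g" "b \<in> AA g"
  shows "GoodE g (\<lambda>n. ct g * ghs g d a n * ghs g e b n)"
proof -
  define l where "l = lcm d e"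
  define r where "r = l div d"
  define s where "s = l div e"
  define \<alpha> where "\<alpha> = a ^ r * b ^ s"
  have lpos: "l > 0" using assms by (simp add: l_def lcm_pos_nat)
  have aA: "\<alpha> \<in> AA g" unfolding \<alpha>_def using assms by (intro AA_mult AA_power)
  have eq: "(\<lambda>n. ct g * ghs g d a n * ghs g e b n) =
     (\<lambda>n. of_nat (gcd d e) * (\<Sum>j<s. ghs g l (tt g ^ j * \<alpha>) n - ghs g l (tt g ^ (r + j) * \<alpha>) n))"
    by (rule ext) (simp add: prod_ident[OF assms(1,2)] l_def r_def s_def \<alpha>_def)
  show ?thesis unfolding eq
    by (intro GoodE_of_nat_mult GoodE_sum GoodE_diff GoodE_ghs lpos AA_mult AA_power tt_AA aA) simp
qed

lemma Good_prod:
  assumes "\<And>d. d \<ge> 1 \<Longrightarrow> F d \<in> AA g" "\<And>d. d \<ge> 1 \<Longrightarrow> F' d \<in> AA g"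
  shows "Good g (\<lambda>n. ct g * ghost g F n * ghost g F' n)"
  unfolding Good_def
proof
  fix N
  define w where "w = (\<lambda>n. \<Sum>d\<in>{1..N}. \<Sum>e\<in>{1..N}. ct g * ghs g d (F d) n * ghs g e (F' e) n)"
  have "GoodE g w" unfolding w_def
    using assms by (intro GoodE_sum GoodE_pair) auto
  moreover have "\<forall>n. 1 \<le> n \<and> n \<le> N \<longrightarrow> w n = ct g * ghost g F n * ghost g F' n"
  proof (intro allI impI)
    fix n assume n: "1 \<le> n \<and> n \<le> N"
    have "ct g * ghost g F n * ghost g F' n
        = ct g * ((\<Sum>d\<in>{1..N}. ghs g d (F d) n) * (\<Sum>e\<in>{1..N}. ghs g e (F' e) n))"
      using n by (simp add: ghost_repr[of n N] mult.assoc)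
    also have "\<dots> = ct g * (\<Sum>d\<in>{1..N}. \<Sum>e\<in>{1..N}. ghs g d (F d) n * ghs g e (F' e) n)"
      by (simp only: sum_product)
    also have "\<dots> = w n" unfolding w_def by (simp add: sum_distrib_left mult.assoc)
    finally show "w n = ct g * ghost g F n * ghost g F' n" by simp
  qed
  ultimately show "\<exists>w'. (\<forall>n. 1 \<le> n \<and> n \<le> N \<longrightarrow> w' n = ct g * ghost g F n * ghost g F' n) \<and> GoodE g w'"
    by blast
qed



section \<open>Variable support\<close>

definition supp :: "var set \<Rightarrow> mpoly \<Rightarrow> bool" where
  "supp V p \<longleftrightarrow> (\<forall>m\<in>Poly_Mapping.keys p. Poly_Mapping.keys m \<subseteq> V)"

lemma supp_add: "supp V p \<Longrightarrow> supp V q \<Longrightarrow> supp V (p + q)"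
  unfolding supp_def using keys_add[of p q] by blast

lemma supp_uminus: "supp V p \<Longrightarrow> supp V (- p)"
  unfolding supp_def by simp

lemma supp_diff: "supp V p \<Longrightarrow> supp V q \<Longrightarrow> supp V (p - q)"
  using supp_add[of V p "- q"] supp_uminus[of V q] by simp

lemma supp_mult: "supp V p \<Longrightarrow> supp V q \<Longrightarrow> supp V (p * q)"
  unfolding supp_def
proof
  fix m assume p: "\<forall>m\<in>Poly_Mapping.keys p. Poly_Mapping.keys m \<subseteq> V"
    and q: "\<forall>m\<in>Poly_Mapping.keys q. Poly_Mapping.keys m \<subseteq> V"
    and m: "m \<in> Poly_Mapping.keys (p * q)"
  then obtain a b where "m = a + b" "a \<in> Poly_Mapping.keys p" "b \<in> Poly_Mapping.keys q"
    using keys_mult[of p q] by blast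
  then show "Poly_Mapping.keys m \<subseteq> V" using p q keys_add[of a b] by blast
qed

lemma supp_Const: "supp V (Const c)"
  unfolding supp_def Const_def by simp

lemma supp_one: "supp V 1" using supp_Const[of V 1] by simp
lemma supp_zero: "supp V 0" using supp_Const[of V 0] by simp

lemma supp_of_nat: "supp V (of_nat k)" using supp_Const[of V "of_nat k"] by (simp add: Const_of_nat)

lemma supp_Var: "v \<in> V \<Longrightarrow> supp V (Var v)"
  unfolding supp_def Var_def by simp

lemma supp_power: "supp V p \<Longrightarrow> supp V (p ^ k)"
  by (induct k) (simp_all add: supp_one supp_mult)

lemma supp_sum: "(\<And>x. x \<in> S \<Longrightarrow> supp V (f x)) \<Longrightarrow> supp V (sum f S)"
  by (induct S rule: infinite_finite_induct) (simp_all add: supp_zero supp_add)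

lemma supp_mono: "V \<subseteq> V' \<Longrightarrow> supp V p \<Longrightarrow> supp V' p"
  unfolding supp_def by blast

lemma supp_qk: "supp V (qk g k)"
  unfolding qk_def by (rule supp_Const)

lemma ghost_decomp:
  assumes "n \<ge> 1"
  shows "ghost g F n = of_nat n * F n + (\<Sum>d\<in>{1..n-1}. ghs g d (F d) n)"
proof -
  have seteq: "{1..n} = insert n {1..n-1}" using assms by auto
  have "(\<Sum>d\<in>insert n {1..n-1}. ghs g d (F d) n) = ghs g n (F n) n + (\<Sum>d\<in>{1..n-1}. ghs g d (F d) n)"
    by (rule sum.insert) (use assms in simp_all)
  then have "(\<Sum>d\<in>{1..n}. ghs g d (F d) n) = ghs g n (F n) n + (\<Sum>d\<in>{1..n-1}. ghs g d (F d) n)"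
    by (subst seteq)
  then show ?thesis using ghost_repr[of n n g F] assms by (simp add: ghs_self)
qed

lemma supp_solve:
  assumes mono: "\<And>d n. d dvd n \<Longrightarrow> n \<ge> 1 \<Longrightarrow> V d \<subseteq> V n"
    and gh: "\<And>n. n \<ge> 1 \<Longrightarrow> supp (V n) (ghost g F n)"
  shows "n \<ge> 1 \<Longrightarrow> supp (V n) (F n)"
proof (induct n rule: less_induct)
  case (less n)
  have rest: "supp (V n) (\<Sum>d\<in>{1..n-1}. ghs g d (F d) n)"
  proof (rule supp_sum)
    fix d assume d: "d \<in> {1..n-1}"
    show "supp (V n) (ghs g d (F d) n)"
    proof (cases "d dvd n")
      case True
      have "d < n" "d \<ge> 1" using d less.prems by auto
      then have "supp (V d) (F d)" using less.hyps[of d] by simp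
      then have "supp (V n) (F d)" using mono[OF True less.prems] by (rule supp_mono[rotated])
      then show ?thesis using True
        by (simp add: ghs_def supp_mult supp_of_nat supp_qk supp_power)
    next
      case False then show ?thesis by (simp add: ghs_def supp_zero)
    qed
  qed
  have "of_nat n * F n = ghost g F n - (\<Sum>d\<in>{1..n-1}. ghs g d (F d) n)"
    using ghost_decomp[OF less.prems, of g F] by simp
  then have s1: "supp (V n) (of_nat n * F n)" using gh[OF less.prems] rest by (simp add: supp_diff)
  have inv: "Const [:1 / of_nat n:] * of_nat n = (1::mpoly)"
  proof -
    have "[:1 / of_nat n:] * of_nat n = (1::rat poly)" using less.prems
      by (simp add: of_nat_poly)
    then have "Const ([:1 / of_nat n:] * of_nat n) = 1" by (simp only: Const_one)
    then show ?thesis by (simp only: Const_mult Const_of_nat)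
  qed
  have "F n = Const [:1 / of_nat n:] * (of_nat n * F n)"
    by (simp add: mult.assoc[symmetric] inv)
  then show ?case using s1 supp_Const supp_mult by metis
qed

section \<open>The degenerate case g = 1\<close>

lemma qk_g1: "GG g = 1 \<Longrightarrow> qk g k = of_nat k"
  by (simp add: qk_eq tt_def)

lemma ghs_g1: "GG g = 1 \<Longrightarrow> ghs g d a n = of_nat n * (if d dvd n then a ^ (n div d) else 0)"
  by (auto simp: ghs_def qk_g1 of_nat_mult[symmetric] elim!: dvdE)

lemma int_g1:
  assumes g1: "GG g = 1"
    and R: "\<And>n. n \<ge> 1 \<Longrightarrow> \<exists>R\<in>AA g. ghost g F n = of_nat n * R"
  shows "n \<ge> 1 \<Longrightarrow> F n \<in> AA g"
proof (induct n rule: less_induct)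
  case (less n)
  obtain r where r: "r \<in> AA g" "ghost g F n = of_nat n * r" using R[OF less.prems] by blast
  define Q where "Q = (\<Sum>d\<in>{1..n-1}. if d dvd n then F d ^ (n div d) else 0)"
  have "ghost g F n = of_nat n * F n + of_nat n * Q"
    unfolding ghost_decomp[OF less.prems] Q_def using g1
    by (simp add: ghs_g1 sum_distrib_left)
  then have "of_nat n * (F n + Q) = of_nat n * r" using r(2) by (simp add: algebra_simps)
  then have "F n + Q = r" by (rule of_nat_cancel_mpoly) (use less.prems in simp)
  moreover have "Q \<in> AA g" unfolding Q_def
  proof (rule AA_sum)
    fix d assume d: "d \<in> {1..n-1}"
    then have "d < n" "d \<ge> 1" using less.prems by auto
    then have "F d \<in> AA g" using less.hyps[of d] by simp
    then show "(if d dvd n then F d ^ (n div d) else 0) \<in> AA g" by (simp add: AA_power AA_zero)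
  qed
  ultimately have "F n = r - Q" by (simp add: algebra_simps)
  then show ?case using r(1) \<open>Q \<in> AA g\<close> by (simp add: AA_diff)
qed

lemma ghost_g1: "GG g = 1 \<Longrightarrow> n \<ge> 1 \<Longrightarrow>
   ghost g F n = of_nat n * (\<Sum>d\<in>{1..n}. if d dvd n then F d ^ (n div d) else 0)"
  by (simp add: ghost_repr[of n n] ghs_g1 sum_distrib_left)

lemma ghost_Var_AA: "(\<Sum>d\<in>{1..n}. if d dvd n then Var v ^ (n div d) else 0) \<in> AA g"
  by (intro AA_sum) (simp add: AA_power AA_Var AA_zero)



lemma in_Zg_polyI: "p \<in> AA g \<Longrightarrow> supp V p \<Longrightarrow> in_Zg_poly g V p"
  unfolding in_Zg_poly_def AA_def cset_def supp_def by auto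

lemma pow_sum_AA: "(\<And>d. F d \<in> AA g) \<Longrightarrow> (\<Sum>d\<in>{1..n}. if d dvd n then F d ^ (n div d) else 0) \<in> AA g"
  by (intro AA_sum) (simp add: AA_power AA_zero)

lemma supp_ghost_var:
  assumes "\<And>d. d dvd n \<Longrightarrow> f d \<in> V"
  shows "supp V (ghost g (\<lambda>d. Var (f d)) n)"
  unfolding ghost_def
  using assms by (intro supp_sum) (simp add: supp_mult supp_of_nat supp_Const supp_power supp_Var)

theorem lemma3p3:
  fixes g :: "int poly" and S P I :: "nat \<Rightarrow> mpoly"
  assumes hS: "\<And>n. n \<ge> 1 \<Longrightarrow>
      ghost g S n = ghost g (\<lambda>d. Var (X d)) n + ghost g (\<lambda>d. Var (Y d)) n"
    and hP: "\<And>n. n \<ge> 1 \<Longrightarrow>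
      ghost g P n = Const (1 - map_poly of_int g) *
        ghost g (\<lambda>d. Var (X d)) n * ghost g (\<lambda>d. Var (Y d)) n"
    and hI: "\<And>n. n \<ge> 1 \<Longrightarrow>
      ghost g (\<lambda>d. Var (X d)) n + ghost g I n = 0"
    and n: "n \<ge> 1"
  shows "in_Zg_poly g ({X d | d. d dvd n} \<union> {Y d | d. d dvd n}) (S n)
       \<and> in_Zg_poly g ({X d | d. d dvd n} \<union> {Y d | d. d dvd n}) (P n)
       \<and> in_Zg_poly g {X d | d. d dvd n} (I n)"
proof -
  define gX where "gX = ghost g (\<lambda>d. Var (X d))"
  define gY where "gY = ghost g (\<lambda>d. Var (Y d))"
  have hI': "ghost g I k = - gX k" if "k \<ge> 1" for k
  proof -
    have "ghost g I k = (gX k + ghost g I k) - gX k" by simp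
    also have "\<dots> = - gX k" using hI[OF that] unfolding gX_def by simp
    finally show ?thesis .
  qed
  have hP': "ghost g P k = ct g * gX k * gY k" if "k \<ge> 1" for k
    using hP[OF that] unfolding gX_def gY_def ct_def GG_def .
  have hS': "ghost g S k = gX k + gY k" if "k \<ge> 1" for k
    using hS[OF that] unfolding gX_def gY_def .
  have XA: "\<And>d. d \<ge> 1 \<Longrightarrow> Var (X d) \<in> AA g" and YA: "\<And>d. d \<ge> 1 \<Longrightarrow> Var (Y d) \<in> AA g"
    by (simp_all add: AA_Var)
  have ints: "S n \<in> AA g \<and> P n \<in> AA g \<and> I n \<in> AA g"
  proof (cases "GG g = 1")
    case False
    have gXg: "Good g gX" unfolding gX_def by (rule Good_ghost) (simp add: AA_Var)
    have gYg: "Good g gY" unfolding gY_def by (rule Good_ghost) (simp add: AA_Var)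
    have gS: "Good g (ghost g S)"
      by (rule Good_cong[OF Good_add[OF gXg gYg]]) (simp add: hS')
    have gP: "Good g (ghost g P)"
      unfolding gX_def gY_def
      by (rule Good_cong[OF Good_prod]) (simp_all add: AA_Var hP'[unfolded gX_def gY_def])
    have gI: "Good g (ghost g I)"
      by (rule Good_cong[OF Good_uminus[OF gXg]]) (simp add: hI')
    show ?thesis using integral_all[OF False gS n] integral_all[OF False gP n] integral_all[OF False gI n]
      by simp
  next
    case True
    define SX where "SX k = (\<Sum>d\<in>{1..k}. if d dvd k then Var (X d) ^ (k div d) else 0)" for k
    define SY where "SY k = (\<Sum>d\<in>{1..k}. if d dvd k then Var (Y d) ^ (k div d) else 0)" for k
    have SXA: "SX k \<in> AA g" for k unfolding SX_def by (rule pow_sum_AA) (rule AA_Var)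
    have SYA: "SY k \<in> AA g" for k unfolding SY_def by (rule pow_sum_AA) (rule AA_Var)
    have gX1: "gX k = of_nat k * SX k" if "k \<ge> 1" for k
      unfolding gX_def SX_def using ghost_g1[OF True that] .
    have gY1: "gY k = of_nat k * SY k" if "k \<ge> 1" for k
      unfolding gY_def SY_def using ghost_g1[OF True that] .
    have ct0: "ct g = 0" using True by (simp add: ct_def)
    have "S n \<in> AA g"
    proof (rule int_g1[OF True _ n])
      fix k :: nat assume k: "k \<ge> 1"
      show "\<exists>R\<in>AA g. ghost g S k = of_nat k * R"
        using k SXA SYA by (intro bexI[of _ "SX k + SY k"] AA_add) (simp_all add: hS' gX1 gY1 algebra_simps)
    qed
    moreover have "P n \<in> AA g"
    proof (rule int_g1[OF True _ n])
      fix k :: nat assume k: "k \<ge> 1"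
      show "\<exists>R\<in>AA g. ghost g P k = of_nat k * R"
        using k by (intro bexI[of _ 0]) (simp_all add: hP' ct0 AA_zero)
    qed
    moreover have "I n \<in> AA g"
    proof (rule int_g1[OF True _ n])
      fix k :: nat assume k: "k \<ge> 1"
      show "\<exists>R\<in>AA g. ghost g I k = of_nat k * R"
        using k SXA by (intro bexI[of _ "- SX k"] AA_uminus) (simp_all add: hI' gX1)
    qed
    ultimately show ?thesis by simp
  qed
  define VXY where "VXY k = {X d | d. d dvd k} \<union> {Y d | d. d dvd k}" for k :: nat
  define VX where "VX k = {X d | d. d dvd k}" for k :: nat
  have monoXY: "VXY d \<subseteq> VXY k" if "d dvd k" "k \<ge> 1" for d k
    unfolding VXY_def using that dvd_trans by blast
  have monoX: "VX d \<subseteq> VX k" if "d dvd k" "k \<ge> 1" for d k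
    unfolding VX_def using that dvd_trans by blast
  have sX: "supp (VXY k) (gX k)" "supp (VX k) (gX k)" for k
    unfolding gX_def VXY_def VX_def by (rule supp_ghost_var; blast)+
  have sY: "supp (VXY k) (gY k)" for k
    unfolding gY_def VXY_def by (rule supp_ghost_var) blast
  have suppS: "supp (VXY n) (S n)"
  proof (rule supp_solve[where g=g, OF monoXY _ n])
    fix k :: nat assume k: "k \<ge> 1"
    show "supp (VXY k) (ghost g S k)" unfolding hS'[OF k] by (rule supp_add[OF sX(1) sY])
  qed
  have suppP: "supp (VXY n) (P n)"
  proof (rule supp_solve[where g=g, OF monoXY _ n])
    fix k :: nat assume k: "k \<ge> 1"
    show "supp (VXY k) (ghost g P k)" unfolding hP'[OF k]
      by (rule supp_mult[OF supp_mult[OF _ sX(1)] sY]) (simp add: ct_def supp_Const)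
  qed
  have suppI: "supp (VX n) (I n)"
  proof (rule supp_solve[where g=g, OF monoX _ n])
    fix k :: nat assume k: "k \<ge> 1"
    show "supp (VX k) (ghost g I k)" unfolding hI'[OF k] by (rule supp_uminus[OF sX(2)])
  qed
  show ?thesis
    using ints suppS suppP suppI unfolding VXY_def VX_def by (auto intro: in_Zg_polyI)
qed

end
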